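(* Let $r,c\ge1$, $n=r+c$, $X_1,X_2$ as below, and $1\le K\le 2^{\min(r,c)}$. Let $\varphi$ be uniformly random among permutations of $\{0,1\}^n$ with exactly $K$ $X$-pairs. Any quantum algorithm making $T$ queries to $\varphi$ and $\varphi^{-1}$ that outputs an $X$-pair of $\varphi$ with probability $\epsilon>0$ satisfies $$\epsilon\le\frac{8(T+1)^2K}{2^{\min(r,c)}}.$$
   Context: $X_1\subset\{0,1\}^n$ is the set of strings ending in $0^c$, $X_2\subset\{0,1\}^n$ the set of strings beginning with $0^r$; an $X$-pair of $\varphi$ is $(x,y)\in X_1\times X_2$ with $\varphi(x)=y$. Queries are to the unitaries $O_\varphi:|a\rangle|b\rangle\mapsto|a\rangle|b\oplus\varphi(a)\rangle$ and $O_{\varphi^{-1}}:|a\rangle|b\rangle\mapsto|a\rangle|b\oplus\varphi^{-1}(a)\rangle$; success probability is over $\varphi$ and the algorithm's randomness and measurements. *)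

theory Defs
  imports Complex_Main "HOL-Combinatorics.Permutations"
begin

text \<open>Bit strings of length n are encoded as naturals below 2^n, the first bit being
the most significant one. XOR is bitwise xor on nat.\<close>

definition strings :: "nat \<Rightarrow> nat set" where
  "strings n = {..<2^n}"

text \<open>X1: strings (of length n = r + c) ending in 0^c, i.e. the last c bits vanish.\<close>
definition X1 :: "nat \<Rightarrow> nat \<Rightarrow> nat set" where
  "X1 r c = {x \<in> strings (r + c). 2^c dvd x}"

text \<open>X2: strings beginning with 0^r, i.e. the first r bits vanish.\<close>
definition X2 :: "nat \<Rightarrow> nat \<Rightarrow> nat set" where
  "X2 r c = {y \<in> strings (r + c). y < 2^c}"

definition Xpairs :: "nat \<Rightarrow> nat \<Rightarrow> (nat \<Rightarrow> nat) \<Rightarrow> (nat \<times> nat) set" where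
  "Xpairs r c \<phi> = {(x, y). x \<in> X1 r c \<and> y \<in> X2 r c \<and> \<phi> x = y}"

definition perms_K :: "nat \<Rightarrow> nat \<Rightarrow> nat \<Rightarrow> (nat \<Rightarrow> nat) set" where
  "perms_K r c K = {\<phi>. \<phi> permutes strings (r + c) \<and> card (Xpairs r c \<phi>) = K}"

text \<open>Computational basis of the algorithm's register: (a, b, w) with a the n-bit query
input register, b the n-bit query output register, w the workspace (dimension m).
The parity of w selects whether a query goes to phi (even) or to phi^-1 (odd); this lets
the choice of oracle function be coherent / adaptive.\<close>
type_synonym basis = "nat \<times> nat \<times> nat"
type_synonym state = "basis \<Rightarrow> complex"
type_synonym op = "basis \<Rightarrow> basis \<Rightarrow> complex"

definition basis_set :: "nat \<Rightarrow> nat \<Rightarrow> basis set" where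
  "basis_set n m = strings n \<times> strings n \<times> {..<m}"

definition apply_op :: "basis set \<Rightarrow> op \<Rightarrow> state \<Rightarrow> state" where
  "apply_op S U v = (\<lambda>x. \<Sum>y\<in>S. U x y * v y)"

definition is_unitary :: "basis set \<Rightarrow> op \<Rightarrow> bool" where
  "is_unitary S U \<longleftrightarrow>
     (\<forall>x\<in>S. \<forall>y\<in>S. (\<Sum>z\<in>S. cnj (U z x) * U z y) = (if x = y then 1 else 0))"

text \<open>The query: |a>|b>|w> maps to |a>|b xor phi(a)>|w> (w even) or
|a>|b xor phi^-1(a)>|w> (w odd). As a map on amplitudes (it is an involution on the basis).\<close>
definition query_op :: "nat \<Rightarrow> (nat \<Rightarrow> nat) \<Rightarrow> state \<Rightarrow> state" where
  "query_op n \<phi> v = (\<lambda>(a, b, w).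
      if even w then v (a, xor b (\<phi> a), w)
      else v (a, xor b (inv_into (strings n) \<phi> a), w))"

definition init_state :: state where
  "init_state = (\<lambda>x. if x = (0, 0, 0) then 1 else 0)"

fun run :: "nat \<Rightarrow> nat \<Rightarrow> (nat \<Rightarrow> nat) \<Rightarrow> (nat \<Rightarrow> op) \<Rightarrow> nat \<Rightarrow> state" where
  "run n m \<phi> Us 0 = apply_op (basis_set n m) (Us 0) init_state"
| "run n m \<phi> Us (Suc t) = apply_op (basis_set n m) (Us (Suc t)) (query_op n \<phi> (run n m \<phi> Us t))"

definition success_prob ::
  "nat \<Rightarrow> nat \<Rightarrow> nat \<Rightarrow> (nat \<Rightarrow> op) \<Rightarrow> (basis \<Rightarrow> nat \<times> nat) \<Rightarrow> nat \<Rightarrow> (nat \<Rightarrow> nat) \<Rightarrow> real" where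
  "success_prob r c m Us out T \<phi> =
     (\<Sum>z\<in>basis_set (r + c) m.
        if out z \<in> Xpairs r c \<phi> then (cmod (run (r + c) m \<phi> Us T z))^2 else 0)"

definition avg_success ::
  "nat \<Rightarrow> nat \<Rightarrow> nat \<Rightarrow> nat \<Rightarrow> (nat \<Rightarrow> op) \<Rightarrow> (basis \<Rightarrow> nat \<times> nat) \<Rightarrow> nat \<Rightarrow> real" where
  "avg_success r c K m Us out T =
     (\<Sum>\<phi>\<in>perms_K r c K. success_prob r c m Us out T \<phi>) / real (card (perms_K r c K))"

end

theory Submission
  imports Defs "HOL-Analysis.L2_Norm"
begin


lemma xor_lt: "(b::nat) < 2^n \<Longrightarrow> k < 2^n \<Longrightarrow> xor b k < 2^n"
  by (metis take_bit_nat_eq_self_iff take_bit_xor)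

definition sq :: "state \<Rightarrow> basis set \<Rightarrow> real" where
  "sq v E = (\<Sum>z\<in>E. (cmod (v z))^2)"

lemma finite_basis_set[simp]: "finite (basis_set n m)"
  by (simp add: basis_set_def strings_def)

lemma cmod_sq_cnj: "complex_of_real ((cmod x)^2) = x * cnj x"
  by (simp add: complex_mult_cnj cmod_def power2_eq_square)

lemma unitary_sq:
  assumes U: "is_unitary S U" and fin: "finite S"
  shows "sq (apply_op S U v) S = sq v S"
proof -
  have "complex_of_real (sq (apply_op S U v) S) =
     (\<Sum>z\<in>S. (\<Sum>y\<in>S. U z y * v y) * cnj (\<Sum>y\<in>S. U z y * v y))"
    by (simp only: sq_def apply_op_def of_real_sum cmod_sq_cnj)
  also have "\<dots> = (\<Sum>z\<in>S. \<Sum>y\<in>S. \<Sum>y'\<in>S. (v y * cnj (v y')) * (cnj (U z y') * U z y))"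
    unfolding cnj_sum sum_product by (intro sum.cong refl) (simp add: mult_ac)
  also have "\<dots> = (\<Sum>y\<in>S. \<Sum>y'\<in>S. (v y * cnj (v y')) * (\<Sum>z\<in>S. cnj (U z y') * U z y))"
  proof -
    have "\<And>z. (\<Sum>y\<in>S. \<Sum>y'\<in>S. (v y * cnj (v y')) * (cnj (U z y') * U z y))
       = (\<Sum>y\<in>S. \<Sum>y'\<in>S. (v y * cnj (v y')) * (cnj (U z y') * U z y))" by simp
    have "(\<Sum>z\<in>S. \<Sum>y\<in>S. \<Sum>y'\<in>S. (v y * cnj (v y')) * (cnj (U z y') * U z y))
       = (\<Sum>y\<in>S. \<Sum>z\<in>S. \<Sum>y'\<in>S. (v y * cnj (v y')) * (cnj (U z y') * U z y))"
      by (rule sum.swap)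
    also have "\<dots> = (\<Sum>y\<in>S. \<Sum>y'\<in>S. \<Sum>z\<in>S. (v y * cnj (v y')) * (cnj (U z y') * U z y))"
      by (rule sum.cong[OF refl], rule sum.swap)
    also have "\<dots> = (\<Sum>y\<in>S. \<Sum>y'\<in>S. (v y * cnj (v y')) * (\<Sum>z\<in>S. cnj (U z y') * U z y))"
      by (simp add: sum_distrib_left)
    finally show ?thesis .
  qed
  also have "\<dots> = (\<Sum>y\<in>S. \<Sum>y'\<in>S. if y' = y then v y * cnj (v y') else 0)"
    using U unfolding is_unitary_def by (intro sum.cong refl) auto
  also have "\<dots> = (\<Sum>y\<in>S. v y * cnj (v y))"
    using fin by simp
  also have "\<dots> = complex_of_real (sq v S)"
    by (simp only: sq_def of_real_sum cmod_sq_cnj)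
  finally show ?thesis by (simp only: of_real_eq_iff)
qed

definition sh :: "(nat \<Rightarrow> nat \<Rightarrow> nat) \<Rightarrow> basis \<Rightarrow> basis" where
  "sh g z = (case z of (a, b, w) \<Rightarrow> (a, xor b (g a w), w))"

definition gq :: "nat \<Rightarrow> (nat \<Rightarrow> nat) \<Rightarrow> nat \<Rightarrow> nat \<Rightarrow> nat" where
  "gq n \<phi> a w = (if even w then \<phi> a else inv_into (strings n) \<phi> a)"

lemma query_sh: "query_op n \<phi> v = (\<lambda>z. v (sh (gq n \<phi>) z))"
  by (auto simp: query_op_def sh_def gq_def fun_eq_iff)

lemma sh_sh: "sh g (sh g z) = z"
  by (cases z) (simp add: sh_def xor.assoc)

lemma sh_in:
  assumes "\<forall>a\<in>strings n. \<forall>w. g a w \<in> strings n" "z \<in> basis_set n m"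
  shows "sh g z \<in> basis_set n m"
  using assms by (cases z) (auto simp: sh_def basis_set_def strings_def xor_lt)

lemma sh_fst[simp]: "fst (sh g z) = fst z" and sh_snd2[simp]: "snd (snd (sh g z)) = snd (snd z)"
  by (cases z; simp add: sh_def)+

definition ES :: "nat \<Rightarrow> nat \<Rightarrow> (nat \<Rightarrow> nat \<Rightarrow> bool) \<Rightarrow> basis set" where
  "ES n m Q = {z \<in> basis_set n m. Q (fst z) (snd (snd z))}"

lemma sh_bij:
  assumes "\<forall>a\<in>strings n. \<forall>w. g a w \<in> strings n"
  shows "bij_betw (sh g) (ES n m Q) (ES n m Q)"
  by (rule bij_betw_byWitness[where f'="sh g"]) (auto simp: ES_def sh_sh sh_in[OF assms])

lemma sq_sh:
  assumes "\<forall>a\<in>strings n. \<forall>w. g a w \<in> strings n"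
  shows "sq (\<lambda>z. v (sh g z)) (ES n m Q) = sq v (ES n m Q)"
  unfolding sq_def using sum.reindex_bij_betw[OF sh_bij[OF assms], of "\<lambda>z. (cmod (v z))^2" m Q]
  by simp

lemma ES_UNIV: "ES n m (\<lambda>a w. True) = basis_set n m"
  by (simp add: ES_def)

lemma sq_sh_full:
  assumes "\<forall>a\<in>strings n. \<forall>w. g a w \<in> strings n"
  shows "sq (\<lambda>z. v (sh g z)) (basis_set n m) = sq v (basis_set n m)"
  using sq_sh[OF assms, of v m "\<lambda>a w. True"] by (simp add: ES_UNIV)

lemma sq_split:
  assumes "finite B"
  shows "sq v B = sq v {z\<in>B. P z} + sq v {z\<in>B. \<not> P z}"
proof -
  have "B = {z\<in>B. P z} \<union> {z\<in>B. \<not> P z}" by auto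
  then have "sq v B = sq v ({z\<in>B. P z} \<union> {z\<in>B. \<not> P z})" by simp
  also have "\<dots> = sq v {z\<in>B. P z} + sq v {z\<in>B. \<not> P z}"
    unfolding sq_def using assms by (intro sum.union_disjoint) auto
  finally show ?thesis .
qed

lemma sum_sq_le2: "(x + y)^2 \<le> 2 * x^2 + 2 * (y::real)^2"
proof -
  have "0 \<le> (x - y)^2" by simp
  thus ?thesis by (simp add: power2_eq_square algebra_simps)
qed

lemma sh_diff:
  assumes g: "\<forall>a\<in>strings n. \<forall>w. g a w \<in> strings n"
    and h: "\<forall>a\<in>strings n. \<forall>w. h a w \<in> strings n"
  shows "sq (\<lambda>z. v (sh g z) - v (sh h z)) (basis_set n m)
     \<le> 4 * sq v (ES n m (\<lambda>a w. g a w \<noteq> h a w))"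
proof -
  let ?B = "basis_set n m" and ?E = "ES n m (\<lambda>a w. g a w \<noteq> h a w)"
  let ?d = "\<lambda>z. v (sh g z) - v (sh h z)"
  let ?F = "{z\<in>?B. \<not> g (fst z) (snd (snd z)) \<noteq> h (fst z) (snd (snd z))}"
  have 1: "sq ?d ?B = sq ?d ?E + sq ?d ?F"
    unfolding ES_def by (rule sq_split) simp
  have 2: "sq ?d ?F = 0"
  proof -
    have "\<And>z. g (fst z) (snd (snd z)) = h (fst z) (snd (snd z)) \<Longrightarrow> sh g z = sh h z"
      by (auto simp: sh_def split: prod.split)
    thus ?thesis unfolding sq_def by (intro sum.neutral) simp
  qed
  have 3: "sq ?d ?E \<le> (\<Sum>z\<in>?E. 2 * (cmod (v (sh g z)))^2 + 2 * (cmod (v (sh h z)))^2)"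
    unfolding sq_def
  proof (rule sum_mono)
    fix z
    have "cmod (v (sh g z) - v (sh h z)) \<le> cmod (v (sh g z)) + cmod (v (sh h z))"
      by (rule norm_triangle_ineq4)
    hence "(cmod (v (sh g z) - v (sh h z)))^2 \<le> (cmod (v (sh g z)) + cmod (v (sh h z)))^2"
      by (intro power_mono) simp_all
    also have "\<dots> \<le> 2 * (cmod (v (sh g z)))^2 + 2 * (cmod (v (sh h z)))^2"
      by (rule sum_sq_le2)
    finally show "(cmod (v (sh g z) - v (sh h z)))^2 \<le> 2 * (cmod (v (sh g z)))^2 + 2 * (cmod (v (sh h z)))^2" .
  qed
  have 4: "(\<Sum>z\<in>?E. 2 * (cmod (v (sh g z)))^2 + 2 * (cmod (v (sh h z)))^2)
      = 2 * sq (\<lambda>z. v (sh g z)) ?E + 2 * sq (\<lambda>z. v (sh h z)) ?E"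
    by (simp only: sq_def sum.distrib sum_distrib_left)
  have 5: "sq (\<lambda>z. v (sh g z)) ?E = sq v ?E" "sq (\<lambda>z. v (sh h z)) ?E = sq v ?E"
    by (rule sq_sh[OF g], rule sq_sh[OF h])
  show ?thesis using 1 2 3 4 5 by linarith
qed

definition N :: "basis set \<Rightarrow> state \<Rightarrow> real" where
  "N B v = sqrt (sq v B)"

lemma N_L2: "N B v = L2_set (\<lambda>z. cmod (v z)) B"
  by (simp add: N_def sq_def L2_set_def)

lemma N_triangle: "N B (\<lambda>z. v z + w z) \<le> N B v + N B w"
proof -
  have "N B (\<lambda>z. v z + w z) \<le> L2_set (\<lambda>z. cmod (v z) + cmod (w z)) B"
    unfolding N_L2 by (rule L2_set_mono) (auto intro: norm_triangle_ineq)
  also have "\<dots> \<le> N B v + N B w"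
    unfolding N_L2 by (rule L2_set_triangle_ineq)
  finally show ?thesis .
qed

lemma N_nonneg: "0 \<le> N B v"
  by (simp add: N_L2)

lemma gq_in:
  assumes "\<phi> permutes strings n"
  shows "\<forall>a\<in>strings n. \<forall>w. gq n \<phi> a w \<in> strings n"
proof (intro ballI allI)
  fix a w assume a: "a \<in> strings n"
  have "\<phi> ` strings n = strings n" using assms by (rule permutes_image)
  then show "gq n \<phi> a w \<in> strings n"
    using a assms by (auto simp: gq_def permutes_in_image intro: inv_into_into)
qed

lemma apply_op_diff:
  "apply_op B U v z - apply_op B U w z = apply_op B U (\<lambda>z. v z - w z) z"
  by (simp add: apply_op_def sum_subtractf[symmetric] right_diff_distrib)

lemma hybrid:
  fixes n m :: nat and Us :: "nat \<Rightarrow> op" and \<psi> \<rho> :: "nat \<Rightarrow> nat"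
  assumes U: "\<forall>i\<le>T. is_unitary (basis_set n m) (Us i)"
    and p: "\<psi> permutes strings n" and q: "\<rho> permutes strings n"
    and tT: "t \<le> T"
  shows "N (basis_set n m) (\<lambda>z. run n m \<psi> Us t z - run n m \<rho> Us t z)
     \<le> (\<Sum>i<t. 2 * N (ES n m (\<lambda>a w. gq n \<psi> a w \<noteq> gq n \<rho> a w)) (run n m \<rho> Us i))"
  using tT
proof (induction t)
  case 0
  show ?case by (simp add: N_def sq_def)
next
  case (Suc t)
  let ?B = "basis_set n m" and ?E = "ES n m (\<lambda>a w. gq n \<psi> a w \<noteq> gq n \<rho> a w)"
  let ?x = "run n m \<psi> Us t" and ?y = "run n m \<rho> Us t"
  have IH: "N ?B (\<lambda>z. ?x z - ?y z) \<le> (\<Sum>i<t. 2 * N ?E (run n m \<rho> Us i))"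
    using Suc by simp
  have Ut: "is_unitary ?B (Us (Suc t))" using U Suc.prems by simp
  have e1: "N ?B (\<lambda>z. run n m \<psi> Us (Suc t) z - run n m \<rho> Us (Suc t) z)
     = N ?B (\<lambda>z. query_op n \<psi> ?x z - query_op n \<rho> ?y z)"
    by (simp add: apply_op_diff N_def unitary_sq[OF Ut])
  have e2: "(\<lambda>z. query_op n \<psi> ?x z - query_op n \<rho> ?y z)
     = (\<lambda>z. (\<lambda>z. ?x (sh (gq n \<psi>) z) - ?y (sh (gq n \<psi>) z)) z
          + (\<lambda>z. ?y (sh (gq n \<psi>) z) - ?y (sh (gq n \<rho>) z)) z)"
    by (simp add: query_sh)
  have 1: "N ?B (\<lambda>z. run n m \<psi> Us (Suc t) z - run n m \<rho> Us (Suc t) z)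
     \<le> N ?B (\<lambda>z. ?x (sh (gq n \<psi>) z) - ?y (sh (gq n \<psi>) z))
       + N ?B (\<lambda>z. ?y (sh (gq n \<psi>) z) - ?y (sh (gq n \<rho>) z))"
    unfolding e1 e2 by (rule N_triangle)
  have 2: "N ?B (\<lambda>z. ?x (sh (gq n \<psi>) z) - ?y (sh (gq n \<psi>) z)) = N ?B (\<lambda>z. ?x z - ?y z)"
    unfolding N_def using sq_sh_full[OF gq_in[OF p], of "\<lambda>z. ?x z - ?y z" m] by simp
  have "sq (\<lambda>z. ?y (sh (gq n \<psi>) z) - ?y (sh (gq n \<rho>) z)) ?B \<le> 4 * sq ?y ?E"
    by (rule sh_diff[OF gq_in[OF p] gq_in[OF q]])
  hence 3: "N ?B (\<lambda>z. ?y (sh (gq n \<psi>) z) - ?y (sh (gq n \<rho>) z)) \<le> 2 * N ?E ?y"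
  proof -
    have "sqrt (sq (\<lambda>z. ?y (sh (gq n \<psi>) z) - ?y (sh (gq n \<rho>) z)) ?B) \<le> sqrt (4 * sq ?y ?E)"
      using \<open>sq _ _ \<le> _\<close> by (rule real_sqrt_le_mono)
    also have "sqrt (4 * sq ?y ?E) = 2 * sqrt (sq ?y ?E)"
      by (simp add: real_sqrt_mult)
    finally show ?thesis unfolding N_def .
  qed
  show ?case using 1 2 3 IH by simp
qed

lemma run_norm:
  assumes U: "\<forall>i\<le>T. is_unitary (basis_set n m) (Us i)" and m: "m \<ge> 1"
    and p: "\<phi> permutes strings n" and tT: "t \<le> T"
  shows "sq (run n m \<phi> Us t) (basis_set n m) = 1"
  using tT
proof (induction t)
  case 0
  have "sq init_state (basis_set n m) = (\<Sum>z\<in>basis_set n m. if z = (0,0,0) then 1 else 0)"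
    unfolding sq_def init_state_def by (intro sum.cong) auto
  also have "\<dots> = 1" using m by (simp add: basis_set_def strings_def)
  finally show ?case using U by (simp add: unitary_sq)
next
  case (Suc t)
  then show ?case using U sq_sh_full[OF gq_in[OF p]] by (simp add: unitary_sq query_sh)
qed

lemma cauchy_sum: "(\<Sum>i\<in>I. f i)^2 \<le> real (card I) * (\<Sum>i\<in>I. (f i)^2)"
proof -
  have "\<bar>\<Sum>i\<in>I. f i\<bar> \<le> (\<Sum>i\<in>I. \<bar>f i\<bar> * \<bar>1\<bar>)" by (simp add: sum_abs)
  also have "\<dots> \<le> L2_set f I * L2_set (\<lambda>i. 1) I" by (rule L2_set_mult_ineq)
  finally have h: "\<bar>\<Sum>i\<in>I. f i\<bar> \<le> L2_set f I * sqrt (real (card I))"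
    by (simp add: L2_set_constant)
  have "(\<Sum>i\<in>I. f i)^2 = \<bar>\<Sum>i\<in>I. f i\<bar>^2" by simp
  also have "\<dots> \<le> (L2_set f I * sqrt (real (card I)))^2"
    using h by (intro power_mono) auto
  also have "\<dots> = real (card I) * (\<Sum>i\<in>I. (f i)^2)"
    by (simp add: power_mult_distrib L2_set_def sum_nonneg)
  finally show ?thesis .
qed

lemma sq_mono_set: "A \<subseteq> B \<Longrightarrow> finite B \<Longrightarrow> sq v A \<le> sq v B"
  unfolding sq_def by (rule sum_mono2) auto

lemma succ_bound:
  fixes n m :: nat and Us :: "nat \<Rightarrow> op" and \<psi> \<rho> :: "nat \<Rightarrow> nat"
  assumes U: "\<forall>i\<le>T. is_unitary (basis_set n m) (Us i)"
    and p: "\<psi> permutes strings n" and q: "\<rho> permutes strings n"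
    and MB: "M \<subseteq> basis_set n m"
  shows "sq (run n m \<psi> Us T) M \<le> (real T + 1) * (sq (run n m \<rho> Us T) M
       + 4 * (\<Sum>i<T. sq (run n m \<rho> Us i) (ES n m (\<lambda>a w. gq n \<psi> a w \<noteq> gq n \<rho> a w))))"
proof -
  let ?B = "basis_set n m" and ?E = "ES n m (\<lambda>a w. gq n \<psi> a w \<noteq> gq n \<rho> a w)"
  let ?x = "run n m \<psi> Us T" and ?y = "run n m \<rho> Us T"
  have finM: "finite M" using MB finite_subset finite_basis_set by blast
  have "N M ?x = N M (\<lambda>z. ?y z + (?x z - ?y z))" by simp
  also have "\<dots> \<le> N M ?y + N M (\<lambda>z. ?x z - ?y z)" by (rule N_triangle)
  also have "N M (\<lambda>z. ?x z - ?y z) \<le> N ?B (\<lambda>z. ?x z - ?y z)"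
    unfolding N_def by (intro real_sqrt_le_mono sq_mono_set MB) simp
  also have "N ?B (\<lambda>z. ?x z - ?y z) \<le> (\<Sum>i<T. 2 * N ?E (run n m \<rho> Us i))"
    by (rule hybrid[OF U p q order_refl])
  finally have h: "N M ?x \<le> N M ?y + (\<Sum>i<T. 2 * N ?E (run n m \<rho> Us i))" by simp
  define f where "f i = (if i = 0 then N M ?y else 2 * N ?E (run n m \<rho> Us (i - 1)))" for i
  have sf: "(\<Sum>i<Suc T. f i) = N M ?y + (\<Sum>i<T. 2 * N ?E (run n m \<rho> Us i))"
    unfolding sum.lessThan_Suc_shift by (simp add: f_def)
  have sf2: "(\<Sum>i<Suc T. (f i)^2) = sq ?y M + 4 * (\<Sum>i<T. sq (run n m \<rho> Us i) ?E)"
    unfolding sum.lessThan_Suc_shift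
    by (simp add: f_def N_def power_mult_distrib sum_distrib_left sq_def sum_nonneg)
  have "sq ?x M = (N M ?x)^2" by (simp add: N_def sq_def sum_nonneg)
  also have "\<dots> \<le> (\<Sum>i<Suc T. f i)^2"
    using h sf by (intro power_mono) (auto simp: N_nonneg)
  also have "\<dots> \<le> real (card {..<Suc T}) * (\<Sum>i<Suc T. (f i)^2)" by (rule cauchy_sum)
  also have "\<dots> = (real T + 1) * (sq ?y M + 4 * (\<Sum>i<T. sq (run n m \<rho> Us i) ?E))"
    using sf2 by simp
  finally show ?thesis .
qed




lemma card_X2: "card (X2 r c) = 2^c"
proof -
  have "X2 r c = {..<2^c}" by (auto simp: X2_def strings_def power_add intro: less_le_trans)
  thus ?thesis by simp
qed

lemma X1_sub: "X1 r c \<subseteq> strings (r+c)" and X2_sub: "X2 r c \<subseteq> strings (r+c)"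
  by (auto simp: X1_def X2_def)

lemma card_X1: "card (X1 r c) = 2^r"
proof -
  have "X1 r c = (\<lambda>i. 2^c * i) ` {..<2^r}"
  proof (rule set_eqI, rule iffI)
    fix x :: nat assume "x \<in> X1 r c"
    then obtain i where i: "x = 2^c * i" and "x < 2^(r+c)" by (auto simp: X1_def strings_def)
    hence "i < 2^r" by (simp add: power_add mult.commute)
    thus "x \<in> (\<lambda>i. 2^c * i) ` {..<2^r}" using i by auto
  next
    fix x :: nat assume "x \<in> (\<lambda>i. 2^c * i) ` {..<2^r}"
    then obtain i where "i < 2^r" "x = 2^c * i" by auto
    thus "x \<in> X1 r c" by (auto simp: X1_def strings_def power_add mult.commute)
  qed
  moreover have "inj_on (\<lambda>i. 2^c * i) {..<(2::nat)^r}" by (auto intro: inj_onI)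
  ultimately show ?thesis by (simp add: card_image)
qed

lemma card_if: "finite B \<Longrightarrow> card {b\<in>B. Q b} = (\<Sum>b\<in>B. if Q b then 1 else (0::nat))"
proof -
  assume "finite B"
  moreover have "{b\<in>B. Q b} = B \<inter> {b. Q b}" by auto
  ultimately show ?thesis by (simp add: sum.If_cases)
qed

lemma card_sum_swap:
  assumes "finite A" "finite B"
  shows "(\<Sum>a\<in>A. card {b\<in>B. P a b}) = (\<Sum>b\<in>B. card {a\<in>A. P a b})"
proof -
  have "(\<Sum>a\<in>A. card {b\<in>B. P a b}) = (\<Sum>a\<in>A. \<Sum>b\<in>B. if P a b then 1 else 0)"
    using assms by (simp only: card_if)
  also have "\<dots> = (\<Sum>b\<in>B. \<Sum>a\<in>A. if P a b then 1 else 0)" by (rule sum.swap)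
  also have "\<dots> = (\<Sum>b\<in>B. card {a\<in>A. P a b})"
    using assms by (simp only: card_if)
  finally show ?thesis .
qed

locale fixrho =
  fixes r c K :: nat and \<rho> :: "nat \<Rightarrow> nat"
  assumes rho: "\<rho> permutes strings (r+c)"
    and nox: "\<forall>x\<in>X1 r c. \<rho> x \<notin> X2 r c"
begin

abbreviation "S \<equiv> strings (r+c)"
abbreviation "XA \<equiv> X1 r c"
abbreviation "XB \<equiv> X2 r c"

definition Y :: "nat set" where "Y = {y \<in> S. \<rho> y \<in> XB}"

definition SW :: "(nat \<Rightarrow> nat) set" where
  "SW = {s. (\<forall>x. s (s x) = x) \<and> (\<forall>x. x \<notin> XA \<union> Y \<longrightarrow> s x = x)
          \<and> (\<forall>x\<in>XA. s x \<noteq> x \<longrightarrow> s x \<in> Y) \<and> (\<forall>y\<in>Y. s y \<noteq> y \<longrightarrow> s y \<in> XA)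
          \<and> card {x\<in>XA. s x \<noteq> x} = K}"

definition As :: "(nat \<Rightarrow> nat) \<Rightarrow> nat set" where "As s = {x\<in>XA. s x \<noteq> x}"
definition Bs :: "(nat \<Rightarrow> nat) \<Rightarrow> nat set" where "Bs s = {x\<in>Y. s x \<noteq> x}"

lemma Y_sub: "Y \<subseteq> S" by (auto simp: Y_def)

lemma XA_Y: "XA \<inter> Y = {}" using nox by (auto simp: Y_def)

lemma card_Y: "card Y = 2^c"
proof -
  have "\<rho> ` Y = XB"
  proof
    show "\<rho> ` Y \<subseteq> XB" by (auto simp: Y_def)
    show "XB \<subseteq> \<rho> ` Y"
    proof
      fix y assume y: "y \<in> XB"
      hence "y \<in> \<rho> ` S" using X2_sub permutes_image[OF rho] by auto
      then obtain x where "x \<in> S" "y = \<rho> x" by auto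
      thus "y \<in> \<rho> ` Y" using y by (auto simp: Y_def)
    qed
  qed
  moreover have "inj_on \<rho> Y" using permutes_inj[OF rho] by (auto intro: inj_on_subset)
  ultimately show ?thesis using card_image card_X2 by metis
qed

lemma finite_S: "finite S" by (simp add: strings_def)

lemma SW_perm: "s \<in> SW \<Longrightarrow> s permutes (XA \<union> Y)"
proof -
  assume s: "s \<in> SW"
  have inv: "\<And>x. s (s x) = x" using s by (simp add: SW_def)
  show ?thesis unfolding permutes_def
  proof (intro conjI allI impI)
    fix x assume "x \<notin> XA \<union> Y" thus "s x = x" using s by (simp add: SW_def)
  next
    fix y show "\<exists>!x. s x = y"
      by (rule ex1I[of _ "s y"]) (use inv in metis)+
  qed
qed

lemma SW_permS: "s \<in> SW \<Longrightarrow> s permutes S"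
  using SW_perm permutes_subset X1_sub Y_sub by (metis Un_least)

lemma finite_SW: "finite SW"
proof -
  have "SW \<subseteq> {s. s permutes S}" using SW_permS by auto
  thus ?thesis using finite_permutations[OF finite_S] finite_subset by blast
qed

lemma As_card: "s \<in> SW \<Longrightarrow> card (As s) = K"
  by (simp add: SW_def As_def)

lemma s_As: "s \<in> SW \<Longrightarrow> s ` As s = Bs s"
proof -
  assume s: "s \<in> SW"
  show ?thesis
  proof
    show "s ` As s \<subseteq> Bs s"
    proof
      fix b assume "b \<in> s ` As s"
      then obtain a where a: "a \<in> XA" "s a \<noteq> a" "b = s a" by (auto simp: As_def)
      hence "s a \<in> Y" using s by (simp add: SW_def)
      moreover have "s (s a) \<noteq> s a" using a s by (simp add: SW_def)
      ultimately show "b \<in> Bs s" using a by (simp add: Bs_def)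
    qed
    show "Bs s \<subseteq> s ` As s"
    proof
      fix b assume b: "b \<in> Bs s"
      hence bb: "b \<in> Y" "s b \<noteq> b" by (auto simp: Bs_def)
      hence "s b \<in> XA" using s by (simp add: SW_def)
      moreover have "s (s b) \<noteq> s b" using bb s by (simp add: SW_def)
      ultimately have "s b \<in> As s" by (simp add: As_def)
      moreover have "b = s (s b)" using s by (simp add: SW_def)
      ultimately show "b \<in> s ` As s" by blast
    qed
  qed
qed

lemma Bs_card: "s \<in> SW \<Longrightarrow> card (Bs s) = K"
proof -
  assume s: "s \<in> SW"
  have "inj s"
  proof (rule injI)
    fix x y assume "s x = s y"
    then have "s (s x) = s (s y)" by simp
    thus "x = y" using s by (simp add: SW_def)
  qed
  hence "card (s ` As s) = card (As s)" by (simp add: card_image inj_on_subset)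
  thus ?thesis using s_As[OF s] As_card[OF s] by simp
qed


lemma conj_SW:
  assumes s: "s \<in> SW" and ti: "\<And>x. \<tau> (\<tau> x) = x"
    and tA: "\<And>x. \<tau> x \<in> XA \<longleftrightarrow> x \<in> XA" and tY: "\<And>x. \<tau> x \<in> Y \<longleftrightarrow> x \<in> Y"
  shows "\<tau> \<circ> s \<circ> \<tau> \<in> SW" and "As (\<tau> \<circ> s \<circ> \<tau>) = \<tau> ` As s" and "Bs (\<tau> \<circ> s \<circ> \<tau>) = \<tau> ` Bs s"
proof -
  have si: "\<And>x. s (s x) = x" using s by (simp add: SW_def)
  have sfix: "\<And>x. x \<notin> XA \<union> Y \<Longrightarrow> s x = x" using s by (simp add: SW_def)
  have sA: "\<And>x. x \<in> XA \<Longrightarrow> s x \<noteq> x \<Longrightarrow> s x \<in> Y" using s by (simp add: SW_def)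
  have sY: "\<And>x. x \<in> Y \<Longrightarrow> s x \<noteq> x \<Longrightarrow> s x \<in> XA" using s by (simp add: SW_def)
  have neq: "\<And>x. (\<tau> (s (\<tau> x)) \<noteq> x) \<longleftrightarrow> (s (\<tau> x) \<noteq> \<tau> x)" by (metis ti)
  have injt: "inj \<tau>" by (metis injI ti)
  show eqA: "As (\<tau> \<circ> s \<circ> \<tau>) = \<tau> ` As s"
  proof (rule set_eqI)
    fix x
    have "x \<in> \<tau> ` As s \<longleftrightarrow> \<tau> x \<in> As s"
      by (metis (no_types, lifting) image_iff ti)
    thus "x \<in> As (\<tau> \<circ> s \<circ> \<tau>) \<longleftrightarrow> x \<in> \<tau> ` As s"
      by (simp add: As_def neq tA)
  qed
  show "Bs (\<tau> \<circ> s \<circ> \<tau>) = \<tau> ` Bs s"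
  proof (rule set_eqI)
    fix x
    have "x \<in> \<tau> ` Bs s \<longleftrightarrow> \<tau> x \<in> Bs s"
      by (metis (no_types, lifting) image_iff ti)
    thus "x \<in> Bs (\<tau> \<circ> s \<circ> \<tau>) \<longleftrightarrow> x \<in> \<tau> ` Bs s"
      by (simp add: Bs_def neq tY)
  qed
  have cA: "card {x\<in>XA. (\<tau> \<circ> s \<circ> \<tau>) x \<noteq> x} = K"
    using eqA As_card[OF s] card_image[OF inj_on_subset[OF injt]] unfolding As_def by simp
  show "\<tau> \<circ> s \<circ> \<tau> \<in> SW"
    unfolding SW_def
  proof (intro CollectI conjI allI impI ballI cA)
    fix x show "(\<tau> \<circ> s \<circ> \<tau>) ((\<tau> \<circ> s \<circ> \<tau>) x) = x" by (simp add: ti si)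
  next
    fix x assume "x \<notin> XA \<union> Y"
    hence "\<tau> x \<notin> XA \<union> Y" using tA tY by simp
    thus "(\<tau> \<circ> s \<circ> \<tau>) x = x" using sfix ti by simp
  next
    fix x assume "x \<in> XA" "(\<tau> \<circ> s \<circ> \<tau>) x \<noteq> x"
    thus "(\<tau> \<circ> s \<circ> \<tau>) x \<in> Y" using sA[of "\<tau> x"] tA tY neq by simp
  next
    fix x assume "x \<in> Y" "(\<tau> \<circ> s \<circ> \<tau>) x \<noteq> x"
    thus "(\<tau> \<circ> s \<circ> \<tau>) x \<in> XA" using sY[of "\<tau> x"] tA tY neq by simp
  qed
qed

lemma count_sym:
  assumes ti: "\<And>x. \<tau> (\<tau> x) = x"
    and tA: "\<And>x. \<tau> x \<in> XA \<longleftrightarrow> x \<in> XA" and tY: "\<And>x. \<tau> x \<in> Y \<longleftrightarrow> x \<in> Y"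
  shows "card {s\<in>SW. x \<in> As s} = card {s\<in>SW. \<tau> x \<in> As s}"
    and "card {s\<in>SW. x \<in> Bs s} = card {s\<in>SW. \<tau> x \<in> Bs s}"
proof -
  let ?f = "\<lambda>s. \<tau> \<circ> s \<circ> \<tau>"
  have ff: "?f (?f s) = s" for s by (simp add: fun_eq_iff ti)
  have inA: "y \<in> As (?f s) \<longleftrightarrow> \<tau> y \<in> As s" if "s \<in> SW" for s y
    using conj_SW(2)[OF that ti tA tY] by (metis image_iff ti)
  have inB: "y \<in> Bs (?f s) \<longleftrightarrow> \<tau> y \<in> Bs s" if "s \<in> SW" for s y
    using conj_SW(3)[OF that ti tA tY] by (metis image_iff ti)
  have "bij_betw ?f {s\<in>SW. \<tau> x \<in> As s} {s\<in>SW. x \<in> As s}"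
    by (rule bij_betw_byWitness[where f'="?f"])
      (auto simp: ff inA ti conj_SW(1)[OF _ ti tA tY] simp del: comp_apply)
  thus "card {s\<in>SW. x \<in> As s} = card {s\<in>SW. \<tau> x \<in> As s}" by (simp add: bij_betw_same_card)
  have "bij_betw ?f {s\<in>SW. \<tau> x \<in> Bs s} {s\<in>SW. x \<in> Bs s}"
    by (rule bij_betw_byWitness[where f'="?f"])
      (auto simp: ff inB ti conj_SW(1)[OF _ ti tA tY] simp del: comp_apply)
  thus "card {s\<in>SW. x \<in> Bs s} = card {s\<in>SW. \<tau> x \<in> Bs s}" by (simp add: bij_betw_same_card)
qed


lemma transpose_ok:
  assumes "x \<in> W" "x' \<in> W" "\<And>z. z \<in> W \<Longrightarrow> z \<notin> V"
  shows "\<And>z. Transposition.transpose x x' z \<in> W \<longleftrightarrow> z \<in> W"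
    and "\<And>z. Transposition.transpose x x' z \<in> V \<longleftrightarrow> z \<in> V"
  using assms by (auto simp: Transposition.transpose_def)

lemma count_A:
  assumes x: "x \<in> XA"
  shows "card {s\<in>SW. x \<in> As s} * 2^r = K * card SW"
proof -
  have eq: "card {s\<in>SW. x' \<in> As s} = card {s\<in>SW. x \<in> As s}" if x': "x' \<in> XA" for x'
  proof -
    let ?t = "Transposition.transpose x x'"
    have d: "\<And>z. z \<in> XA \<Longrightarrow> z \<notin> Y" using XA_Y by auto
    show ?thesis
      using count_sym(1)[of ?t x', OF _ transpose_ok(1)[OF x x' d] transpose_ok(2)[OF x x' d]]
      by simp
  qed
  have "(\<Sum>x'\<in>XA. card {s\<in>SW. x' \<in> As s}) = (\<Sum>s\<in>SW. card {x'\<in>XA. x' \<in> As s})"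
    by (rule card_sum_swap) (auto simp: finite_SW X1_def strings_def)
  also have "\<dots> = (\<Sum>s\<in>SW. K)"
  proof (rule sum.cong[OF refl])
    fix s assume "s \<in> SW"
    moreover have "{x'\<in>XA. x' \<in> As s} = As s" by (auto simp: As_def)
    ultimately show "card {x'\<in>XA. x' \<in> As s} = K" using As_card by simp
  qed
  finally have "(\<Sum>x'\<in>XA. card {s\<in>SW. x' \<in> As s}) = K * card SW" by simp
  moreover have "(\<Sum>x'\<in>XA. card {s\<in>SW. x' \<in> As s}) = card XA * card {s\<in>SW. x \<in> As s}"
    using eq by simp
  ultimately show ?thesis using card_X1 by (simp add: mult.commute)
qed

lemma count_B:
  assumes x: "x \<in> Y"
  shows "card {s\<in>SW. x \<in> Bs s} * 2^c = K * card SW"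
proof -
  have eq: "card {s\<in>SW. x' \<in> Bs s} = card {s\<in>SW. x \<in> Bs s}" if x': "x' \<in> Y" for x'
  proof -
    let ?t = "Transposition.transpose x x'"
    have d: "\<And>z. z \<in> Y \<Longrightarrow> z \<notin> XA" using XA_Y by auto
    show ?thesis
      using count_sym(2)[of ?t x', OF _ transpose_ok(2)[OF x x' d] transpose_ok(1)[OF x x' d]]
      by simp
  qed
  have fY: "finite Y" using Y_sub finite_S finite_subset by blast
  have "(\<Sum>x'\<in>Y. card {s\<in>SW. x' \<in> Bs s}) = (\<Sum>s\<in>SW. card {x'\<in>Y. x' \<in> Bs s})"
    by (rule card_sum_swap) (auto simp: finite_SW fY)
  also have "\<dots> = (\<Sum>s\<in>SW. K)"
  proof (rule sum.cong[OF refl])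
    fix s assume "s \<in> SW"
    moreover have "{x'\<in>Y. x' \<in> Bs s} = Bs s" by (auto simp: Bs_def)
    ultimately show "card {x'\<in>Y. x' \<in> Bs s} = K" using Bs_card by simp
  qed
  finally have "(\<Sum>x'\<in>Y. card {s\<in>SW. x' \<in> Bs s}) = K * card SW" by simp
  moreover have "(\<Sum>x'\<in>Y. card {s\<in>SW. x' \<in> Bs s}) = card Y * card {s\<in>SW. x \<in> Bs s}"
    using eq by simp
  ultimately show ?thesis using card_Y by (simp add: mult.commute)
qed

lemma count_A_le: "real (card {s\<in>SW. x \<in> As s}) \<le> real K * real (card SW) / 2^r"
proof (cases "x \<in> XA")
  case True
  have "real (card {s\<in>SW. x \<in> As s}) * 2^r = real K * real (card SW)"
    using arg_cong[OF count_A[OF True], of real] by simp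
  thus ?thesis by (simp add: field_simps)
next
  case False
  hence "{s\<in>SW. x \<in> As s} = {}" by (auto simp: As_def)
  hence "card {s\<in>SW. x \<in> As s} = 0" by (simp only: card.empty)
  thus ?thesis by simp
qed

lemma count_B_le: "real (card {s\<in>SW. x \<in> Bs s}) \<le> real K * real (card SW) / 2^c"
proof (cases "x \<in> Y")
  case True
  have "real (card {s\<in>SW. x \<in> Bs s}) * 2^c = real K * real (card SW)"
    using arg_cong[OF count_B[OF True], of real] by simp
  thus ?thesis by (simp add: field_simps)
next
  case False
  hence "{s\<in>SW. x \<in> Bs s} = {}" by (auto simp: Bs_def)
  hence "card {s\<in>SW. x \<in> Bs s} = 0" by (simp only: card.empty)
  thus ?thesis by simp
qed


lemma psi_perm: "s \<in> SW \<Longrightarrow> \<rho> \<circ> s permutes S"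
  by (rule permutes_compose[OF SW_permS rho])

lemma psi_Xpairs: "s \<in> SW \<Longrightarrow> Xpairs r c (\<rho> \<circ> s) = (\<lambda>x. (x, \<rho> (s x))) ` As s"
proof -
  assume s: "s \<in> SW"
  show ?thesis
  proof (rule set_eqI, rule iffI)
    fix p assume "p \<in> Xpairs r c (\<rho> \<circ> s)"
    then obtain x y where p: "p = (x, y)" "x \<in> XA" "y \<in> XB" "\<rho> (s x) = y"
      by (auto simp: Xpairs_def)
    have "s x \<noteq> x"
    proof
      assume "s x = x" thus False using p nox by auto
    qed
    thus "p \<in> (\<lambda>x. (x, \<rho> (s x))) ` As s" using p by (auto simp: As_def)
  next
    fix p assume "p \<in> (\<lambda>x. (x, \<rho> (s x))) ` As s"
    then obtain x where x: "p = (x, \<rho> (s x))" "x \<in> XA" "s x \<noteq> x" by (auto simp: As_def)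
    hence "s x \<in> Y" using s by (simp add: SW_def)
    thus "p \<in> Xpairs r c (\<rho> \<circ> s)" using x by (auto simp: Xpairs_def Y_def)
  qed
qed

lemma psi_card: "s \<in> SW \<Longrightarrow> card (Xpairs r c (\<rho> \<circ> s)) = K"
  by (simp add: psi_Xpairs card_image inj_on_def As_card)

lemma psi_permsK: "s \<in> SW \<Longrightarrow> \<rho> \<circ> s \<in> perms_K r c K"
  by (simp add: perms_K_def psi_perm psi_card)

lemma inv_psi:
  assumes s: "s \<in> SW" and a: "a \<in> S"
  shows "inv_into S (\<rho> \<circ> s) a = s (inv_into S \<rho> a)"
proof -
  have img: "\<rho> ` S = S" by (rule permutes_image[OF rho])
  let ?b = "inv_into S \<rho> a"
  have aim: "a \<in> \<rho> ` S" using a img by simp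
  have b: "?b \<in> S" "\<rho> ?b = a" by (rule inv_into_into[OF aim], rule f_inv_into_f[OF aim])
  have si: "s (s ?b) = ?b" using s unfolding SW_def by blast
  have "s ?b \<in> S" using b(1) permutes_in_image[OF SW_permS[OF s]] by simp
  moreover have "(\<rho> \<circ> s) (s ?b) = a" using b(2) si by simp
  moreover have "inj_on (\<rho> \<circ> s) S" by (rule permutes_inj_on[OF psi_perm[OF s]])
  ultimately show ?thesis by (intro inv_into_f_eq)
qed

definition uq :: "nat \<Rightarrow> nat \<Rightarrow> nat" where
  "uq a w = (if even w then a else inv_into S \<rho> a)"

lemma gq_diff:
  assumes s: "s \<in> SW" and a: "a \<in> S" and d: "gq (r+c) (\<rho> \<circ> s) a w \<noteq> gq (r+c) \<rho> a w"
  shows "uq a w \<in> As s \<or> uq a w \<in> Bs s"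
proof -
  have "s (uq a w) \<noteq> uq a w"
    using d inv_psi[OF s a] by (auto simp: gq_def uq_def split: if_splits)
  moreover have "\<And>x. s x \<noteq> x \<Longrightarrow> x \<in> As s \<or> x \<in> Bs s"
  proof -
    fix x assume "s x \<noteq> x"
    moreover have "x \<notin> XA \<union> Y \<Longrightarrow> s x = x" using s unfolding SW_def by blast
    ultimately show "x \<in> As s \<or> x \<in> Bs s" unfolding As_def Bs_def by blast
  qed
  ultimately show ?thesis by blast
qed


lemma sq_swap:
  assumes "finite B" "finite W"
  shows "(\<Sum>s\<in>W. sq v {z\<in>B. P s z}) = (\<Sum>z\<in>B. (cmod (v z))^2 * real (card {s\<in>W. P s z}))"
proof -
  have "(\<Sum>s\<in>W. sq v {z\<in>B. P s z}) = (\<Sum>s\<in>W. \<Sum>z\<in>B. if P s z then (cmod (v z))^2 else 0)"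
    unfolding sq_def using assms by (simp add: sum.inter_filter)
  also have "\<dots> = (\<Sum>z\<in>B. \<Sum>s\<in>W. if P s z then (cmod (v z))^2 else 0)" by (rule sum.swap)
  also have "\<dots> = (\<Sum>z\<in>B. (cmod (v z))^2 * real (card {s\<in>W. P s z}))"
  proof (rule sum.cong[OF refl])
    fix z
    have "(\<Sum>s\<in>W. if P s z then (cmod (v z))^2 else 0) = (\<Sum>s\<in>{s\<in>W. P s z}. (cmod (v z))^2)"
      by (rule sum.inter_filter[symmetric]) (rule assms(2))
    also have "\<dots> = real (card {s\<in>W. P s z}) * (cmod (v z))^2" by simp
    finally show "(\<Sum>s\<in>W. if P s z then (cmod (v z))^2 else 0) = (cmod (v z))^2 * real (card {s\<in>W. P s z})"
      by (simp add: mult.commute)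
  qed
  finally show ?thesis .
qed

lemma weighted_le:
  assumes "\<And>z. z \<in> B \<Longrightarrow> g z \<le> C" "sq v B = 1"
  shows "(\<Sum>z\<in>B. (cmod (v z))^2 * g z) \<le> C"
proof -
  have "(\<Sum>z\<in>B. (cmod (v z))^2 * g z) \<le> (\<Sum>z\<in>B. (cmod (v z))^2 * C)"
    using assms(1) by (intro sum_mono mult_left_mono) auto
  also have "\<dots> = C * sq v B" by (simp add: sq_def sum_distrib_left mult.commute)
  finally show ?thesis using assms(2) by simp
qed

lemma arith_fin:
  fixes a b q t :: real
  assumes "a \<le> q" "b \<le> q" "0 \<le> t"
  shows "a + 4 * (t * (a + b)) \<le> (1 + 8 * t) * q"
proof -
  have "t * (a + b) \<le> t * (2 * q)" using assms by (intro mult_left_mono) auto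
  thus ?thesis using assms by (simp add: algebra_simps)
qed

lemma success_sq: "success_prob r c m Us out T \<phi>
   = sq (run (r+c) m \<phi> Us T) {z\<in>basis_set (r+c) m. out z \<in> Xpairs r c \<phi>}"
  unfolding success_prob_def sq_def by (simp add: sum.inter_filter)

lemma sum_bound:
  assumes U: "\<forall>i\<le>T. is_unitary (basis_set (r+c) m) (Us i)" and m: "m \<ge> 1"
  shows "(\<Sum>s\<in>SW. success_prob r c m Us out T (\<rho> \<circ> s))
     \<le> (real T + 1) * (1 + 8 * real T) * real K * real (card SW) / 2 ^ min r c"
proof -
  let ?B = "basis_set (r+c) m"
  let ?v = "\<lambda>i. run (r+c) m \<rho> Us i"
  let ?u = "\<lambda>z. uq (fst z) (snd (snd z))"
  let ?a = "\<lambda>s. sq (?v T) {z\<in>?B. fst (out z) \<in> As s}"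
  let ?b = "\<lambda>s i. sq (?v i) {z\<in>?B. ?u z \<in> As s \<or> ?u z \<in> Bs s}"
  let ?W = "real K * real (card SW)"
  have fB: "finite ?B" by simp
  have norm1: "\<And>i. i \<le> T \<Longrightarrow> sq (?v i) ?B = 1" by (rule run_norm[OF U m rho])
  have each: "success_prob r c m Us out T (\<rho> \<circ> s) \<le> (real T + 1) * (?a s + 4 * (\<Sum>i<T. ?b s i))"
    if s: "s \<in> SW" for s
  proof -
    let ?M = "{z\<in>?B. out z \<in> Xpairs r c (\<rho> \<circ> s)}"
    let ?E = "ES (r+c) m (\<lambda>a w. gq (r+c) (\<rho> \<circ> s) a w \<noteq> gq (r+c) \<rho> a w)"
    have 1: "success_prob r c m Us out T (\<rho> \<circ> s) \<le> (real T + 1) * (sq (?v T) ?M + 4 * (\<Sum>i<T. sq (?v i) ?E))"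
      unfolding success_sq by (rule succ_bound[OF U psi_perm[OF s] rho]) auto
    have 2: "sq (?v T) ?M \<le> ?a s"
      by (rule sq_mono_set) (auto simp: psi_Xpairs[OF s])
    have 3: "sq (?v i) ?E \<le> ?b s i" for i
    proof (rule sq_mono_set)
      show "?E \<subseteq> {z\<in>?B. ?u z \<in> As s \<or> ?u z \<in> Bs s}"
      proof
        fix z assume z: "z \<in> ?E"
        hence "fst z \<in> S" by (auto simp: ES_def basis_set_def)
        thus "z \<in> {z\<in>?B. ?u z \<in> As s \<or> ?u z \<in> Bs s}" using z gq_diff[OF s] by (auto simp: ES_def)
      qed
    qed simp
    have "(\<Sum>i<T. sq (?v i) ?E) \<le> (\<Sum>i<T. ?b s i)" using 3 by (rule sum_mono)
    hence "sq (?v T) ?M + 4 * (\<Sum>i<T. sq (?v i) ?E) \<le> ?a s + 4 * (\<Sum>i<T. ?b s i)" using 2 by linarith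
    thus ?thesis using 1 by (smt (verit) mult_left_mono of_nat_0_le_iff)
  qed
  have A: "(\<Sum>s\<in>SW. ?a s) \<le> ?W / 2^r"
  proof -
    have "(\<Sum>s\<in>SW. ?a s) = (\<Sum>z\<in>?B. (cmod (?v T z))^2 * real (card {s\<in>SW. fst (out z) \<in> As s}))"
      by (rule sq_swap[OF fB finite_SW])
    also have "\<dots> \<le> ?W / 2^r"
      by (rule weighted_le[OF count_A_le norm1]) simp
    finally show ?thesis .
  qed
  have Bi: "(\<Sum>s\<in>SW. ?b s i) \<le> ?W / 2^r + ?W / 2^c" if i: "i < T" for i
  proof -
    have "(\<Sum>s\<in>SW. ?b s i) = (\<Sum>z\<in>?B. (cmod (?v i z))^2 * real (card {s\<in>SW. ?u z \<in> As s \<or> ?u z \<in> Bs s}))"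
      by (rule sq_swap[OF fB finite_SW])
    also have "\<dots> \<le> ?W / 2^r + ?W / 2^c"
    proof (rule weighted_le)
      fix z
      have "{s\<in>SW. ?u z \<in> As s \<or> ?u z \<in> Bs s} = {s\<in>SW. ?u z \<in> As s} \<union> {s\<in>SW. ?u z \<in> Bs s}" by auto
      hence "card {s\<in>SW. ?u z \<in> As s \<or> ?u z \<in> Bs s} \<le> card {s\<in>SW. ?u z \<in> As s} + card {s\<in>SW. ?u z \<in> Bs s}"
        by (simp add: card_Un_le)
      hence "real (card {s\<in>SW. ?u z \<in> As s \<or> ?u z \<in> Bs s}) \<le> real (card {s\<in>SW. ?u z \<in> As s}) + real (card {s\<in>SW. ?u z \<in> Bs s})"
        by linarith
      thus "real (card {s\<in>SW. ?u z \<in> As s \<or> ?u z \<in> Bs s}) \<le> ?W / 2^r + ?W / 2^c"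
        using count_A_le[of "?u z"] count_B_le[of "?u z"] by linarith
    next
      show "sq (?v i) ?B = 1" using i by (intro norm1) simp
    qed
    finally show ?thesis .
  qed
  have "(\<Sum>s\<in>SW. success_prob r c m Us out T (\<rho> \<circ> s))
      \<le> (\<Sum>s\<in>SW. (real T + 1) * (?a s + 4 * (\<Sum>i<T. ?b s i)))"
    using each by (rule sum_mono)
  also have "\<dots> = (real T + 1) * ((\<Sum>s\<in>SW. ?a s) + 4 * (\<Sum>i<T. \<Sum>s\<in>SW. ?b s i))"
  proof -
    have "(\<Sum>s\<in>SW. (real T + 1) * (?a s + 4 * (\<Sum>i<T. ?b s i)))
       = (real T + 1) * (\<Sum>s\<in>SW. ?a s + 4 * (\<Sum>i<T. ?b s i))"
      by (simp only: sum_distrib_left)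
    also have "(\<Sum>s\<in>SW. ?a s + 4 * (\<Sum>i<T. ?b s i)) = (\<Sum>s\<in>SW. ?a s) + 4 * (\<Sum>s\<in>SW. \<Sum>i<T. ?b s i)"
      by (simp only: sum.distrib sum_distrib_left)
    also have "(\<Sum>s\<in>SW. \<Sum>i<T. ?b s i) = (\<Sum>i<T. \<Sum>s\<in>SW. ?b s i)"
      by (rule sum.swap)
    finally show ?thesis .
  qed
  also have "\<dots> \<le> (real T + 1) * (?W / 2^r + 4 * (\<Sum>i<T. ?W / 2^r + ?W / 2^c))"
  proof -
    have "(\<Sum>i<T. \<Sum>s\<in>SW. ?b s i) \<le> (\<Sum>i<T. ?W / 2^r + ?W / 2^c)"
      using Bi by (intro sum_mono) simp
    thus ?thesis using A by (intro mult_left_mono) auto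
  qed
  also have "\<dots> \<le> (real T + 1) * (1 + 8 * real T) * ?W / 2 ^ min r c"
  proof -
    have W0: "0 \<le> ?W" by simp
    have r: "?W / 2^r \<le> ?W / 2 ^ min r c" and cc: "?W / 2^c \<le> ?W / 2 ^ min r c"
      using W0 by (auto intro!: divide_left_mono power_increasing)
    have "?W / 2^r + 4 * (\<Sum>i<T. ?W / 2^r + ?W / 2^c) = ?W / 2^r + 4 * (real T * (?W / 2^r + ?W / 2^c))"
      by simp
    also have "\<dots> \<le> (1 + 8 * real T) * (?W / 2 ^ min r c)"
      by (rule arith_fin[OF r cc]) simp
    finally have "?W / 2^r + 4 * (\<Sum>i<T. ?W / 2^r + ?W / 2^c) \<le> (1 + 8 * real T) * (?W / 2 ^ min r c)" .
    hence "(real T + 1) * (?W / 2^r + 4 * (\<Sum>i<T. ?W / 2^r + ?W / 2^c))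
       \<le> (real T + 1) * ((1 + 8 * real T) * (?W / 2 ^ min r c))"
      by (intro mult_left_mono) auto
    thus ?thesis by simp
  qed
  finally show ?thesis by (simp add: mult.assoc)
qed

end




lemma P0_fixrho:
  assumes "\<rho> \<in> perms_K r c 0"
  shows "fixrho r c \<rho>"
proof
  show "\<rho> permutes strings (r+c)" using assms by (simp add: perms_K_def)
  have fin: "finite (Xpairs r c \<rho>)"
  proof -
    have "Xpairs r c \<rho> \<subseteq> X1 r c \<times> X2 r c" by (auto simp: Xpairs_def)
    moreover have "finite (X1 r c \<times> X2 r c)" by (auto simp: X1_def X2_def strings_def)
    ultimately show ?thesis by (rule finite_subset)
  qed
  hence "Xpairs r c \<rho> = {}" using assms by (simp add: perms_K_def)
  thus "\<forall>x\<in>X1 r c. \<rho> x \<notin> X2 r c" by (auto simp: Xpairs_def)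
qed

definition Sig :: "nat \<Rightarrow> nat \<Rightarrow> nat \<Rightarrow> ((nat \<Rightarrow> nat) \<times> (nat \<Rightarrow> nat)) set" where
  "Sig r c K = (SIGMA \<rho>:perms_K r c 0. fixrho.SW r c K \<rho>)"

definition mk :: "nat set \<Rightarrow> (nat \<Rightarrow> nat) \<Rightarrow> nat \<Rightarrow> nat" where
  "mk A g x = (if x \<in> A then g x else if x \<in> g ` A then inv_into A g x else x)"

locale fixphi =
  fixes r c K :: nat and \<phi> :: "nat \<Rightarrow> nat"
  assumes phi: "\<phi> permutes strings (r+c)" and phiK: "card (Xpairs r c \<phi>) = K"
begin

abbreviation "S \<equiv> strings (r+c)"
abbreviation "XA \<equiv> X1 r c"
abbreviation "XB \<equiv> X2 r c"

definition A :: "nat set" where "A = {x\<in>XA. \<phi> x \<in> XB}"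
definition C :: "nat set" where "C = {b\<in>S. b \<notin> XA \<and> \<phi> b \<notin> XB}"
definition INJ :: "(nat \<Rightarrow> nat) set" where "INJ = {g \<in> A \<rightarrow>\<^sub>E C. inj_on g A}"
definition fiber where "fiber = {p \<in> Sig r c K. fst p \<circ> snd p = \<phi>}"

lemma A_sub: "A \<subseteq> XA" by (auto simp: A_def)
lemma C_XA: "C \<inter> XA = {}" by (auto simp: C_def)

lemma A_card: "card A = K"
proof -
  have "Xpairs r c \<phi> = (\<lambda>x. (x, \<phi> x)) ` A" by (auto simp: Xpairs_def A_def)
  moreover have "inj_on (\<lambda>x. (x, \<phi> x)) A" by (auto simp: inj_on_def)
  ultimately show ?thesis using phiK card_image by metis
qed

context
  fixes g assumes g: "g \<in> INJ"
begin

lemma gA: "\<And>a. a \<in> A \<Longrightarrow> g a \<in> C" and ginj: "inj_on g A"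
  using g by (auto simp: INJ_def)

lemma gA_notA: "a \<in> A \<Longrightarrow> g a \<notin> A"
  using gA C_XA A_sub by blast

lemma mk_A: "x \<in> A \<Longrightarrow> mk A g x = g x" by (simp add: mk_def)

lemma mk_gA: "a \<in> A \<Longrightarrow> mk A g (g a) = a"
  using gA_notA ginj by (simp add: mk_def)

lemma mk_other: "x \<notin> A \<Longrightarrow> x \<notin> g ` A \<Longrightarrow> mk A g x = x" by (simp add: mk_def)

lemma mk_mk: "mk A g (mk A g x) = x"
proof -
  consider "x \<in> A" | "x \<in> g ` A" | "x \<notin> A" "x \<notin> g ` A" by blast
  thus ?thesis
  proof cases
    case 1 thus ?thesis by (simp add: mk_A mk_gA)
  next
    case 2 then obtain a where "a \<in> A" "x = g a" by blast
    thus ?thesis by (simp add: mk_A mk_gA)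
  next
    case 3 thus ?thesis by (simp add: mk_other)
  qed
qed


lemma C_sub: "C \<subseteq> S" by (auto simp: C_def)
lemma A_subS: "A \<subseteq> S" using A_sub X1_sub by blast

lemma mk_perm: "mk A g permutes S"
  unfolding permutes_def
proof (intro conjI allI impI)
  fix x assume "x \<notin> S"
  moreover have "g ` A \<subseteq> S" using gA C_sub by blast
  ultimately show "mk A g x = x" using A_subS by (intro mk_other) auto
next
  fix y show "\<exists>!x. mk A g x = y"
    by (rule ex1I[of _ "mk A g y"]) (metis mk_mk)+
qed

lemma rho_perm: "\<phi> \<circ> mk A g permutes S"
  by (rule permutes_compose[OF mk_perm phi])

lemma rho_nox: "\<forall>x\<in>XA. (\<phi> \<circ> mk A g) x \<notin> XB"
proof
  fix x assume x: "x \<in> XA"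
  consider "x \<in> A" | "x \<in> g ` A" | "x \<notin> A" "x \<notin> g ` A" by blast
  thus "(\<phi> \<circ> mk A g) x \<notin> XB"
  proof cases
    case 1 thus ?thesis using gA[OF 1] by (simp add: mk_A C_def)
  next
    case 2 thus ?thesis using x gA C_XA by blast
  next
    case 3
    have e: "mk A g x = x" using 3 by (rule mk_other)
    have "\<phi> x \<notin> XB" using 3(1) x by (simp add: A_def)
    thus ?thesis using e by simp
  qed
qed

lemma rho_P0: "\<phi> \<circ> mk A g \<in> perms_K r c 0"
proof -
  have "Xpairs r c (\<phi> \<circ> mk A g) = {}" using rho_nox by (auto simp: Xpairs_def)
  thus ?thesis using rho_perm by (simp add: perms_K_def)
qed

lemma rho_fix: "fixrho r c (\<phi> \<circ> mk A g)"
  using rho_perm rho_nox by unfold_locales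

lemma mk_SW: "mk A g \<in> fixrho.SW r c K (\<phi> \<circ> mk A g)"
proof -
  let ?s = "mk A g" and ?Y = "fixrho.Y r c (\<phi> \<circ> mk A g)"
  have Y: "y \<in> ?Y \<longleftrightarrow> y \<in> S \<and> \<phi> (?s y) \<in> XB" for y by (simp add: fixrho.Y_def[OF rho_fix])
  have gY: "g a \<in> ?Y" if a: "a \<in> A" for a
    using Y gA[OF a] C_sub mk_gA[OF a] a by (auto simp: A_def)
  have AY: "a \<notin> ?Y" if a: "a \<in> A" for a
    using Y gA[OF a] mk_A[OF a] by (simp add: C_def)
  have eqA: "{x\<in>XA. ?s x \<noteq> x} = A"
  proof (rule set_eqI)
    fix x
    show "x \<in> {x\<in>XA. ?s x \<noteq> x} \<longleftrightarrow> x \<in> A"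
    proof
      assume "x \<in> {x\<in>XA. ?s x \<noteq> x}"
      hence "x \<in> XA" "?s x \<noteq> x" by auto
      moreover have "x \<notin> g ` A" using \<open>x \<in> XA\<close> gA C_XA by blast
      ultimately show "x \<in> A" using mk_other by metis
    next
      assume x: "x \<in> A"
      hence "?s x \<noteq> x" using mk_A gA_notA by metis
      thus "x \<in> {x\<in>XA. ?s x \<noteq> x}" using x A_sub by auto
    qed
  qed
  show ?thesis
    unfolding fixrho.SW_def[OF rho_fix]
  proof (intro CollectI conjI allI impI ballI)
    fix x show "?s (?s x) = x" by (rule mk_mk)
  next
    fix x assume x: "x \<notin> XA \<union> ?Y"
    hence "x \<notin> A" using A_sub by blast
    moreover have "x \<notin> g ` A" using x gY by blast
    ultimately show "?s x = x" by (rule mk_other)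
  next
    fix x assume x: "x \<in> XA" "?s x \<noteq> x"
    hence "x \<in> A" using eqA by blast
    thus "?s x \<in> ?Y" using gY mk_A by simp
  next
    fix y assume y: "y \<in> ?Y" "?s y \<noteq> y"
    have "y \<notin> A" using y AY by blast
    hence "y \<in> g ` A" using y mk_other by metis
    then obtain a where "a \<in> A" "y = g a" by blast
    thus "?s y \<in> XA" using mk_gA A_sub by auto
  next
    show "card {x\<in>XA. ?s x \<noteq> x} = K" using eqA A_card by simp
  qed
qed

lemma G_in: "(\<phi> \<circ> mk A g, mk A g) \<in> fiber"
proof -
  have "\<phi> \<circ> mk A g \<circ> mk A g = \<phi>" by (simp add: fun_eq_iff mk_mk)
  thus ?thesis using rho_P0 mk_SW by (simp add: fiber_def Sig_def)
qed


end

lemma fiber_sub: "fiber \<subseteq> (\<lambda>g. (\<phi> \<circ> mk A g, mk A g)) ` INJ"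
proof
  fix p assume p: "p \<in> fiber"
  obtain \<rho> s where ps: "p = (\<rho>, s)" by (cases p)
  have r0: "\<rho> \<in> perms_K r c 0" and sS: "s \<in> fixrho.SW r c K \<rho>" and comp: "\<rho> \<circ> s = \<phi>"
    using p ps by (auto simp: fiber_def Sig_def)
  interpret R: fixrho r c K \<rho> using P0_fixrho[OF r0] by simp
  have si: "\<And>x. s (s x) = x" using sS unfolding R.SW_def by blast
  have AsA: "R.As s = A"
  proof (rule set_eqI)
    fix x
    have "(x, \<phi> x) \<in> Xpairs r c \<phi> \<longleftrightarrow> x \<in> A" by (simp add: Xpairs_def A_def)
    moreover have "(x, \<phi> x) \<in> Xpairs r c \<phi> \<longleftrightarrow> x \<in> R.As s"
      using R.psi_Xpairs[OF sS] comp by (auto simp: image_iff)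
    ultimately show "x \<in> R.As s \<longleftrightarrow> x \<in> A" by blast
  qed
  define g where "g = restrict s A"
  have gC: "s a \<in> C" if a: "a \<in> A" for a
  proof -
    have aA: "a \<in> R.As s" using a AsA by simp
    hence "a \<in> XA" "s a \<noteq> a" by (auto simp: R.As_def)
    hence sY: "s a \<in> R.Y" using sS unfolding R.SW_def by blast
    hence "s a \<in> S" "s a \<notin> XA" using R.Y_sub R.XA_Y by auto
    moreover have "\<phi> (s a) \<notin> XB" using comp si R.nox \<open>a \<in> XA\<close> by (metis comp_apply)
    ultimately show ?thesis by (simp add: C_def)
  qed
  have ginj: "inj_on g A" unfolding g_def by (rule inj_onI) (metis restrict_apply si)
  have gI: "g \<in> INJ" unfolding INJ_def using gC ginj by (auto simp: g_def)
  have smk: "s = mk A g"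
  proof
    fix x
    consider "x \<in> A" | "x \<in> g ` A" | "x \<notin> A" "x \<notin> g ` A" by blast
    thus "s x = mk A g x"
    proof cases
      case 1 thus ?thesis by (simp add: mk_def g_def)
    next
      case 2 then obtain a where a: "a \<in> A" "x = g a" by blast
      have "mk A g (g a) = a" by (rule mk_gA[OF gI a(1)])
      thus ?thesis using a si by (simp add: g_def)
    next
      case 3
      have "s x = x"
      proof (rule ccontr)
        assume ne: "s x \<noteq> x"
        have "x \<in> XA \<union> R.Y" using ne sS unfolding R.SW_def by blast
        hence "x \<in> R.As s \<or> x \<in> R.Bs s" using ne by (auto simp: R.As_def R.Bs_def)
        moreover have "R.Bs s = s ` A" using R.s_As[OF sS] AsA by simp
        moreover have "s ` A = g ` A" by (simp add: g_def)
        ultimately show False using 3 AsA by blast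
      qed
      thus ?thesis using 3 by (simp add: mk_def)
    qed
  qed
  have "\<rho> = \<phi> \<circ> s"
  proof
    fix x have "\<phi> (s x) = \<rho> (s (s x))" using comp by auto
    thus "\<rho> x = (\<phi> \<circ> s) x" using si by simp
  qed
  thus "p \<in> (\<lambda>g. (\<phi> \<circ> mk A g, mk A g)) ` INJ" using ps smk gI by blast
qed

lemma fiber_eq: "fiber = (\<lambda>g. (\<phi> \<circ> mk A g, mk A g)) ` INJ"
  using fiber_sub G_in by blast

lemma G_inj: "inj_on (\<lambda>g. (\<phi> \<circ> mk A g, mk A g)) INJ"
proof (rule inj_onI)
  fix g g' assume g: "g \<in> INJ" and g': "g' \<in> INJ"
    and eq: "(\<phi> \<circ> mk A g, mk A g) = (\<phi> \<circ> mk A g', mk A g')"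
  hence "\<And>a. a \<in> A \<Longrightarrow> g a = g' a" by (metis mk_A prod.inject)
  moreover have "g \<in> extensional A" "g' \<in> extensional A" using g g' by (auto simp: INJ_def PiE_def)
  ultimately show "g = g'" by (intro extensionalityI) auto
qed

lemma fiber_card: "card fiber = prod ((-) (card C)) {0..<K}"
proof -
  have "card fiber = card INJ" unfolding fiber_eq by (rule card_image[OF G_inj])
  also have "\<dots> = card C ^ (card A - card A) * prod ((-) (card C)) {0..<card A}"
    unfolding INJ_def by (rule card_inj_on_subset_funcset) (auto simp: A_def C_def X1_def strings_def)
  finally show ?thesis by (simp add: A_card)
qed


lemma card_C: "card C + 2^r + 2^c = 2^(r+c) + K"
proof -
  define Dp where "Dp = {b\<in>S. \<phi> b \<in> XB}"
  have fS: "finite S" by (simp add: strings_def)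
  have cS: "card S = 2^(r+c)" by (simp add: strings_def)
  have cD: "card Dp = 2^c"
  proof -
    have "\<phi> ` Dp = XB"
    proof
      show "\<phi> ` Dp \<subseteq> XB" by (auto simp: Dp_def)
      show "XB \<subseteq> \<phi> ` Dp"
      proof
        fix y assume y: "y \<in> XB"
        hence "y \<in> \<phi> ` S" using X2_sub permutes_image[OF phi] by auto
        then obtain x where "x \<in> S" "y = \<phi> x" by auto
        thus "y \<in> \<phi> ` Dp" using y by (auto simp: Dp_def)
      qed
    qed
    moreover have "inj_on \<phi> Dp" using permutes_inj[OF phi] by (auto intro: inj_on_subset)
    ultimately show ?thesis using card_image card_X2 by metis
  qed
  have I: "XA \<inter> Dp = A" using X1_sub by (auto simp: A_def Dp_def)
  have U: "S = (XA \<union> Dp) \<union> C" using X1_sub by (auto simp: Dp_def C_def)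
  have dj: "(XA \<union> Dp) \<inter> C = {}" by (auto simp: Dp_def C_def)
  have fXA: "finite XA" and fD: "finite Dp" and fC: "finite C"
    using fS X1_sub by (auto simp: Dp_def C_def intro: finite_subset)
  have "card S = card (XA \<union> Dp) + card C"
    using U dj fXA fD fC by (metis card_Un_disjoint finite_UnI)
  moreover have "card (XA \<union> Dp) + card (XA \<inter> Dp) = card XA + card Dp"
    using fXA fD by (rule card_Un_Int[symmetric])
  ultimately show ?thesis using cS cD I A_card card_X1 by simp
qed

lemma fiber_card': "card fiber = prod (\<lambda>i. 2^(r+c) + K - 2^r - 2^c - i) {0..<K}"
proof -
  have "card C = 2^(r+c) + K - 2^r - 2^c" using card_C by simp
  thus ?thesis using fiber_card by simp
qed

end




lemma ab_ge: "2 \<le> a \<Longrightarrow> 2 \<le> b \<Longrightarrow> a + b \<le> a * (b::nat)"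
proof -
  assume a: "2 \<le> a" and b: "2 \<le> b"
  have e: "a * b = a + a * (b - 1)" using b by (cases b) auto
  have "2 * (b - 1) \<le> a * (b - 1)" using a by (rule mult_right_mono) simp
  thus ?thesis using e b by linarith
qed

lemma pow_ge: "r \<ge> 1 \<Longrightarrow> c \<ge> 1 \<Longrightarrow> (2::nat)^r + 2^c \<le> 2^(r+c)"
proof -
  assume r: "r \<ge> 1" and c: "c \<ge> 1"
  have a: "(2::nat)^r \<ge> 2^1" using r by (intro power_increasing) simp_all
  have b: "(2::nat)^c \<ge> 2^1" using c by (intro power_increasing) simp_all
  show ?thesis using ab_ge[of "2^r" "2^c"] a b by (simp add: power_add)
qed

lemma finite_PK: "finite (perms_K r c K)"
proof -
  have "perms_K r c K \<subseteq> {\<phi>. \<phi> permutes strings (r+c)}" by (auto simp: perms_K_def)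
  moreover have "finite {\<phi>. \<phi> permutes strings (r+c)}"
    by (rule finite_permutations) (simp add: strings_def)
  ultimately show ?thesis by (rule finite_subset)
qed

lemma finite_SW_all: "\<rho> \<in> perms_K r c 0 \<Longrightarrow> finite (fixrho.SW r c K \<rho>)"
proof -
  assume "\<rho> \<in> perms_K r c 0"
  then interpret R: fixrho r c K \<rho> by (rule P0_fixrho)
  show ?thesis by (rule R.finite_SW)
qed

lemma finite_Sig: "finite (Sig r c K)"
  unfolding Sig_def using finite_PK finite_SW_all by (intro finite_SigmaI) auto

lemma double_count:
  fixes F :: "(nat \<Rightarrow> nat) \<Rightarrow> real"
  shows "(\<Sum>p\<in>Sig r c K. F (fst p \<circ> snd p))
     = real (prod (\<lambda>i. 2^(r+c) + K - 2^r - 2^c - i) {0..<K}) * (\<Sum>\<phi>\<in>perms_K r c K. F \<phi>)"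
proof -
  let ?h = "\<lambda>p. fst p \<circ> snd p"
  let ?c1 = "prod (\<lambda>i. 2^(r+c) + K - 2^r - 2^c - i) {0..<K}"
  have sub: "?h ` Sig r c K \<subseteq> perms_K r c K"
  proof
    fix q assume "q \<in> ?h ` Sig r c K"
    then obtain \<rho> s where q: "q = \<rho> \<circ> s" and r0: "\<rho> \<in> perms_K r c 0" and s: "s \<in> fixrho.SW r c K \<rho>"
      by (auto simp: Sig_def)
    interpret R: fixrho r c K \<rho> using r0 by (rule P0_fixrho)
    show "q \<in> perms_K r c K" using R.psi_permsK[OF s] q by simp
  qed
  have "(\<Sum>p\<in>Sig r c K. F (?h p)) = (\<Sum>\<phi>\<in>perms_K r c K. \<Sum>p\<in>{p. p \<in> Sig r c K \<and> ?h p = \<phi>}. F (?h p))"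
    by (rule sum.group[OF finite_Sig finite_PK sub, symmetric])
  also have "\<dots> = (\<Sum>\<phi>\<in>perms_K r c K. real ?c1 * F \<phi>)"
  proof (rule sum.cong[OF refl])
    fix \<phi> assume \<phi>: "\<phi> \<in> perms_K r c K"
    interpret P: fixphi r c K \<phi> using \<phi> by unfold_locales (auto simp: perms_K_def)
    have "(\<Sum>p\<in>{p. p \<in> Sig r c K \<and> ?h p = \<phi>}. F (?h p)) = (\<Sum>p\<in>P.fiber. F \<phi>)"
      by (rule sum.cong) (auto simp: P.fiber_def)
    also have "\<dots> = real ?c1 * F \<phi>" using P.fiber_card' by simp
    finally show "(\<Sum>p\<in>{p. p \<in> Sig r c K \<and> ?h p = \<phi>}. F (?h p)) = real ?c1 * F \<phi>" .
  qed
  finally show ?thesis by (simp add: sum_distrib_left)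
qed

theorem lemma4:
  fixes r c K T m :: nat and Us :: "nat \<Rightarrow> op" and out :: "basis \<Rightarrow> nat \<times> nat"
    and \<epsilon> :: real
  assumes "r \<ge> 1" and "c \<ge> 1"
    and "1 \<le> K" and "K \<le> 2 ^ min r c"
    and "m \<ge> 1"
    and "\<forall>i\<le>T. is_unitary (basis_set (r + c) m) (Us i)"
    and "\<epsilon> = avg_success r c K m Us out T"
    and "\<epsilon> > 0"
  shows "\<epsilon> \<le> 8 * (real T + 1)^2 * real K / 2 ^ min r c"
proof -
  note U = assms(6)
  let ?PK = "perms_K r c K" and ?P0 = "perms_K r c 0"
  let ?f = "success_prob r c m Us out T"
  let ?c1 = "prod (\<lambda>i. 2^(r+c) + K - 2^r - 2^c - i) {0..<K}"
  define Bc where "Bc = (real T + 1) * (1 + 8 * real T) * real K / 2 ^ min r c"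
  have c1pos: "?c1 > 0"
  proof (rule prod_pos)
    fix i assume "i \<in> {0..<K}"
    thus "2^(r+c) + K - 2^r - 2^c - i > 0" using pow_ge[OF assms(1,2)] by simp
  qed
  have each: "(\<Sum>s\<in>fixrho.SW r c K \<rho>. ?f (\<rho> \<circ> s)) \<le> Bc * real (card (fixrho.SW r c K \<rho>))"
    if r0: "\<rho> \<in> ?P0" for \<rho>
  proof -
    interpret R: fixrho r c K \<rho> using r0 by (rule P0_fixrho)
    show ?thesis using R.sum_bound[OF U assms(5), of out] by (simp add: Bc_def)
  qed
  have "(\<Sum>p\<in>Sig r c K. ?f (fst p \<circ> snd p)) = (\<Sum>\<rho>\<in>?P0. \<Sum>s\<in>fixrho.SW r c K \<rho>. ?f (\<rho> \<circ> s))"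
    unfolding Sig_def
    by (subst sum.Sigma[OF finite_PK], use finite_SW_all in blast) (simp add: case_prod_beta)
  also have "\<dots> \<le> (\<Sum>\<rho>\<in>?P0. Bc * real (card (fixrho.SW r c K \<rho>)))"
    using each by (rule sum_mono)
  also have "\<dots> = Bc * real (card (Sig r c K))"
    unfolding Sig_def using finite_PK finite_SW_all by (simp add: sum_distrib_left)
  finally have le: "(\<Sum>p\<in>Sig r c K. ?f (fst p \<circ> snd p)) \<le> Bc * real (card (Sig r c K))" .
  have cS: "real (card (Sig r c K)) = real ?c1 * real (card ?PK)"
    using double_count[where F="\<lambda>_. 1" and r=r and c=c and K=K] by simp
  have sS: "(\<Sum>p\<in>Sig r c K. ?f (fst p \<circ> snd p)) = real ?c1 * (\<Sum>\<phi>\<in>?PK. ?f \<phi>)"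
    by (rule double_count)
  have h: "real ?c1 * (\<Sum>\<phi>\<in>?PK. ?f \<phi>) \<le> real ?c1 * (Bc * real (card ?PK))"
    using le unfolding cS sS by (simp only: mult_ac)
  have c1r: "0 < real ?c1" using c1pos by (simp only: of_nat_0_less_iff)
  have sumle: "(\<Sum>\<phi>\<in>?PK. ?f \<phi>) \<le> Bc * real (card ?PK)"
    using h c1r by (simp only: mult_le_cancel_left_pos)
  have cPK: "card ?PK > 0"
  proof (rule ccontr)
    assume "\<not> card ?PK > 0"
    hence "avg_success r c K m Us out T = 0" by (simp add: avg_success_def)
    thus False using assms(7,8) by simp
  qed
  have "\<epsilon> = (\<Sum>\<phi>\<in>?PK. ?f \<phi>) / real (card ?PK)" using assms(7) by (simp add: avg_success_def)
  also have "\<dots> \<le> Bc" using sumle cPK by (simp add: divide_le_eq)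
  also have "Bc \<le> 8 * (real T + 1)^2 * real K / 2 ^ min r c"
  proof -
    have "(real T + 1) * (1 + 8 * real T) \<le> 8 * (real T + 1)^2"
      by (simp add: power2_eq_square algebra_simps)
    hence "(real T + 1) * (1 + 8 * real T) * real K \<le> 8 * (real T + 1)^2 * real K"
      by (intro mult_right_mono) auto
    thus ?thesis unfolding Bc_def by (intro divide_right_mono) auto
  qed
  finally show ?thesis .
qed


end
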